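(* Let $t\in(-1,1)$ and $m,n$ integers. (i) If $t\neq0$ and $n-2\ge m\ge0$, then $\det\begin{pmatrix}P_n^m(t)&P_{n-2}^m(t)\\(P_n^m)'(t)&(P_{n-2}^m)'(t)\end{pmatrix}\neq0$. (ii) For $0\le m\le n$, $P_n^m(t)$ and $(P_n^m)'(t)$ do not vanish simultaneously.
   Context: $P_n$ is the Legendre polynomial of degree $n\in\mathbb{N}_0$ and $P_n^m(t)=(1-t^2)^{m/2}\frac{d^m}{dt^m}P_n(t)$, $0\le m\le n$, are the associated Legendre functions of the first kind. *)

theory Defs
  imports "HOL-Analysis.Analysis" "HOL-Computational_Algebra.Polynomial"
begin

definition legendre_poly :: "nat \<Rightarrow> real poly" where
  "legendre_poly n = smult (1 / (2 ^ n * fact n)) ((pderiv ^^ n) ([:-1, 0, 1:] ^ n))"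

definition assoc_legendre :: "nat \<Rightarrow> nat \<Rightarrow> real \<Rightarrow> real" where
  "assoc_legendre n m t = sqrt (1 - t\<^sup>2) ^ m * poly ((pderiv ^^ m) (legendre_poly n)) t"

end

theory Submission
  imports Defs
begin

abbreviation X :: "real poly" where "X \<equiv> [:0,1:]"
abbreviation L :: "real poly" where "L \<equiv> [:-1,0,1:]"

lemma funpow_pderiv_smult: "(pderiv^^k) (smult c p) = smult c ((pderiv^^k) p)"
  by (induction k) (auto simp: pderiv_smult)

lemma funpow_pderiv_add: "(pderiv^^k) (p + q) = (pderiv^^k) p + (pderiv^^k) q"
  by (induction k) (auto simp: pderiv_add)

lemma funpow_pderiv_diff: "(pderiv^^k) (p - q) = (pderiv^^k) p - (pderiv^^k) (q::real poly)"
  by (induction k) (auto simp: pderiv_diff)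

lemma degree_funpow_pderiv: "degree ((pderiv^^k) (p::real poly)) = degree p - k"
  by (induction k) (auto simp: degree_pderiv)

lemma funpow_pderiv_nonzero: "(p::real poly) \<noteq> 0 \<Longrightarrow> k \<le> degree p \<Longrightarrow> (pderiv^^k) p \<noteq> 0"
proof (induction k)
  case 0 then show ?case by simp
next
  case (Suc k)
  have "degree ((pderiv^^k) p) \<noteq> 0" using Suc.prems by (simp add: degree_funpow_pderiv)
  then show ?case by (simp add: pderiv_eq_0_iff)
qed

lemma funpow_pderiv_zero: "degree (p::real poly) < k \<Longrightarrow> (pderiv^^k) p = 0"
proof -
  assume a: "degree p < k"
  then obtain j where k: "k = Suc j" and "degree p \<le> j" by (cases k) auto
  then have "degree ((pderiv^^j) p) = 0" by (simp add: degree_funpow_pderiv)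
  then show ?thesis using k by (simp add: pderiv_eq_0_iff)
qed

lemma funpow_pderiv_X: "(pderiv^^k) (X * g) = X * (pderiv^^k) g + smult (of_nat k) ((pderiv^^(k-1)) g)"
proof (induction k)
  case 0 then show ?case by simp
next
  case (Suc k)
  show ?case
  proof (cases k)
    case 0 then show ?thesis by (simp add: pderiv_mult pderiv_pCons)
  next
    case (Suc j)
    have e: "\<And>q. q + smult (1 + real j) q = smult (real j + 2) (q::real poly)"
      by (simp add: poly_eq_iff algebra_simps)
    show ?thesis using Suc Suc.IH
      by (simp add: pderiv_mult pderiv_pCons pderiv_add pderiv_smult algebra_simps of_nat_Suc e)
  qed
qed

lemma pderiv_L: "pderiv L = smult 2 X"
  by (simp add: pderiv_pCons)

lemma pderiv_fpow: "pderiv (L ^ Suc n) = smult (2 * of_nat (Suc n)) (X * L ^ n)"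
  by (simp only: pderiv_power_Suc pderiv_L) (simp add: algebra_simps)

lemma L_eq: "L = X * X - 1"
  by (simp add: poly_eq_poly_eq_iff[symmetric] fun_eq_iff algebra_simps)

lemma legendre_nonzero: "legendre_poly n \<noteq> 0" and degree_legendre: "degree (legendre_poly n) = n"
proof -
  have L0: "L ^ n \<noteq> 0" by simp
  have dL: "degree (L ^ n) = 2 * n" by (simp add: degree_power_eq)
  have "(pderiv^^n) (L^n) \<noteq> 0" by (rule funpow_pderiv_nonzero[OF L0]) (simp add: dL)
  then show "legendre_poly n \<noteq> 0" by (simp add: legendre_poly_def)
  show "degree (legendre_poly n) = n" by (simp add: legendre_poly_def degree_funpow_pderiv dL)
qed


lemma pderiv_Lpow: "n \<ge> 1 \<Longrightarrow> pderiv (L ^ n) = smult (2 * of_nat n) (X * L ^ (n-1))"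
  using pderiv_fpow[of "n-1"] by simp

lemma ident2: "n \<ge> 1 \<Longrightarrow> (pderiv^^(Suc k)) (L ^ n) =
   smult (2 * of_nat n) (X * (pderiv^^k) (L^(n-1)) + smult (of_nat k) ((pderiv^^(k-1)) (L^(n-1))))"
  by (simp only: funpow_Suc_right o_apply pderiv_Lpow funpow_pderiv_smult funpow_pderiv_X)

lemma ident1: "pderiv (pderiv (L ^ (Suc (Suc j)))) =
   smult (2 * of_nat (j+2) * (2 * of_nat (j+2) - 1)) (L ^ Suc j)
   + smult (4 * of_nat (j+2) * of_nat (j+1)) (L ^ j)"
proof -
  have "pderiv (pderiv (L ^ (Suc (Suc j)))) = smult (2 * of_nat (j+2)) (L ^ Suc j + X * smult (2 * of_nat (j+1)) (X * L^j))"
    by (simp only: pderiv_fpow pderiv_smult pderiv_mult) (simp add: pderiv_pCons algebra_simps)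
  also have "\<dots> = smult (2 * of_nat (j+2) * (2 * of_nat (j+2) - 1)) (L ^ Suc j)
   + smult (4 * of_nat (j+2) * of_nat (j+1)) (L ^ j)"
    by (simp add: poly_eq_poly_eq_iff[symmetric] fun_eq_iff algebra_simps)
  finally show ?thesis .
qed

definition pm :: "nat \<Rightarrow> nat \<Rightarrow> real poly" where
  "pm m n = (pderiv^^m) (legendre_poly n)"

lemma pm_alt: "pm m n = smult (1 / (2 ^ n * fact n)) ((pderiv^^(m+n)) (L^n))"
  by (simp add: pm_def legendre_poly_def funpow_pderiv_smult funpow_add)

lemma recT:
  assumes "n \<ge> 2"
  shows "smult (real n - real m) (pm m n) =
     smult (2 * real n - 1) (X * pm m (n-1)) - smult (real n + real m - 1) (pm m (n-2))"
proof -
  obtain j where nj: "n = Suc (Suc j)" using assms by (metis add_2_eq_Suc le_Suc_ex)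
  define R where "R = (pderiv^^(m+j)) (L^(Suc j))"
  define A where "A = (pderiv^^(m+j+1)) (L^(Suc j))"
  define B where "B = (pderiv^^(m+j)) (L^j)"
  define K where "K = (pderiv^^(m+j+2)) (L^(Suc (Suc j)))"
  have K1: "K = smult (2 * of_nat (j+2) * (2 * of_nat (j+2) - 1)) R + smult (4 * of_nat (j+2) * of_nat (j+1)) B"
  proof -
    have "K = (pderiv^^(m+j)) (pderiv (pderiv (L ^ (Suc (Suc j)))))"
      unfolding K_def by (simp add: funpow_add funpow_Suc_right del: funpow.simps)
    then show ?thesis by (simp only: ident1 funpow_pderiv_add funpow_pderiv_smult R_def B_def)
  qed
  have K2: "K = smult (2 * of_nat (j+2)) (X * A + smult (of_nat (m+j+1)) R)"
    unfolding K_def A_def R_def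
    using ident2[of "Suc (Suc j)" "m+j+1"] by (simp add: add.commute add.left_commute)
  have pn: "pm m n = smult (1 / (2 ^ (j+2) * fact (j+2))) K"
    unfolding pm_alt K_def nj by (simp add: add.commute add.left_commute)
  have pn1: "pm m (n-1) = smult (1 / (2 ^ (j+1) * fact (j+1))) A"
    unfolding pm_alt A_def nj by (simp add: add.commute add.left_commute)
  have pn2: "pm m (n-2) = smult (1 / (2 ^ j * fact j)) B"
    unfolding pm_alt B_def nj by (simp add: add.commute add.left_commute)
  show ?thesis
  proof (simp only: poly_eq_poly_eq_iff[symmetric] fun_eq_iff, intro allI)
    fix x
    define k where "k = poly K x"
    define a where "a = poly A x"
    define b where "b = poly B x"
    define r where "r = poly R x"
    define c where "c = 1 / (2 ^ (j+2) * fact (j+2) :: real)"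
    define d where "d = (2::real) ^ j * fact j"
    have dpos: "d > 0" unfolding d_def by simp
    have d2: "(2::real)^(j+2)*fact(j+2) = 4*(real j+2)*(real j+1)*d"
      unfolding d_def by (simp add: fact_Suc algebra_simps)
    have d1: "(2::real)^(j+1)*fact(j+1) = 2*(real j+1)*d"
      unfolding d_def by (simp add: fact_Suc algebra_simps)
    have c1: "1 / (2 ^ (j+1) * fact (j+1)) = 2 * (real j + 2) * c"
      unfolding c_def d1 d2 using dpos
      by (simp add: divide_simps) (simp add: algebra_simps)
    have c2: "1 / (2 ^ j * fact j) = 4 * (real j + 2) * (real j + 1) * c"
      unfolding c_def d2 d_def[symmetric] using dpos
      by (simp add: divide_simps)
    have e1: "k = 2 * (real j + 2) * (2 * (real j + 2) - 1) * r + 4 * (real j + 2) * (real j + 1) * b"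
      using arg_cong[OF K1, of "\<lambda>p. poly p x"] by (simp add: k_def r_def b_def algebra_simps)
    have e2: "k = 2 * (real j + 2) * (x * a + (real m + real j + 1) * r)"
      using arg_cong[OF K2, of "\<lambda>p. poly p x"] by (simp add: k_def r_def a_def algebra_simps)
    have e1': "4 * (real j + 2) * (real j + 1) * b = k - 2 * (real j + 2) * (2 * (real j + 2) - 1) * r"
      using e1 by simp
    have e2': "2 * (real j + 2) * x * a = k - 2 * (real j + 2) * (real m + real j + 1) * r"
      using e2 by (simp add: algebra_simps)
    have main: "(real j + 2 - real m) * k = (2 * (real j + 2) - 1) * (2 * (real j + 2) * x * a)
        - (real j + 2 + real m - 1) * (4 * (real j + 2) * (real j + 1) * b)"
      by (simp only: e1' e2') (simp add: algebra_simps)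
    have ge: "(real n - real m) * (c * k) = (2*real n - 1) * (x * ((2*(real j+2)*c)*a))
        - (real n + real m - 1) * ((4*(real j+2)*(real j+1)*c)*b)"
    proof -
      have "c * ((real j + 2 - real m) * k) = c * ((2 * (real j + 2) - 1) * (2 * (real j + 2) * x * a)
        - (real j + 2 + real m - 1) * (4 * (real j + 2) * (real j + 1) * b))"
        using main by simp
      then show ?thesis by (simp add: nj algebra_simps)
    qed
    have l: "poly (smult (real n - real m) (pm m n)) x = (real n - real m) * (c * k)"
      by (simp only: pn poly_smult c_def[symmetric] k_def[symmetric])
    have r: "poly (smult (2 * real n - 1) (X * pm m (n - 1)) - smult (real n + real m - 1) (pm m (n - 2))) x
       = (2*real n - 1) * (x * ((2*(real j+2)*c)*a)) - (real n + real m - 1) * ((4*(real j+2)*(real j+1)*c)*b)"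
      by (simp only: pn1 pn2 poly_smult poly_diff poly_mult c1 c2 a_def[symmetric] b_def[symmetric]) simp
    show "poly (smult (real n - real m) (pm m n)) x =
         poly (smult (2 * real n - 1) (X * pm m (n - 1)) - smult (real n + real m - 1) (pm m (n - 2))) x"
      using l r ge by simp
  qed
qed


lemma Walg:
  fixes x a0 a1 a2 a3 a4 d0 d1 d2 d3 d4 al0 al1 al2 be0 be1 be2 ga0 ga1 ga2 :: real
  assumes h1: "al0*a0 = be0*x*a1 - ga0*a2"
  and h1': "al0*d0 = be0*(a1 + x*d1) - ga0*d2"
  and h2: "al1*a1 = be1*x*a2 - ga1*a3"
  and h2': "al1*d1 = be1*(a2+x*d2) - ga1*d3"
  and h3: "al2*a2 = be2*x*a3 - ga2*a4"
  and h3': "al2*d2 = be2*(a3 + x*d3) - ga2*d4"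
  shows "be2*al0*al1*(a0*d2 - a2*d0) = -2*be0*be1*be2*x*a2^2 + be0*ga1*ga2*(a2*d4 - a4*d2)"
  using assms by algebra

lemma recT_vals:
  assumes "n \<ge> 2"
  shows "(real n - real m) * poly (pm m n) x =
     (2 * real n - 1) * x * poly (pm m (n-1)) x - (real n + real m - 1) * poly (pm m (n-2)) x"
    and "(real n - real m) * poly (pderiv (pm m n)) x =
     (2 * real n - 1) * (poly (pm m (n-1)) x + x * poly (pderiv (pm m (n-1))) x)
      - (real n + real m - 1) * poly (pderiv (pm m (n-2))) x"
proof -
  note T = recT[OF assms, of m]
  show "(real n - real m) * poly (pm m n) x =
     (2 * real n - 1) * x * poly (pm m (n-1)) x - (real n + real m - 1) * poly (pm m (n-2)) x"
    using arg_cong[OF T, of "\<lambda>p. poly p x"] by simp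
  show "(real n - real m) * poly (pderiv (pm m n)) x =
     (2 * real n - 1) * (poly (pm m (n-1)) x + x * poly (pderiv (pm m (n-1))) x)
      - (real n + real m - 1) * poly (pderiv (pm m (n-2))) x"
    using arg_cong[OF T, of "\<lambda>p. poly (pderiv p) x"]
    by (simp add: pderiv_smult pderiv_diff pderiv_mult pderiv_pCons algebra_simps)
qed

lemma pm_low: "j < m \<Longrightarrow> pm m j = 0"
  unfolding pm_def by (rule funpow_pderiv_zero) (simp add: degree_legendre)

lemma pm_diag: "\<exists>c. c \<noteq> 0 \<and> pm m m = [:c:]"
proof -
  have nz: "pm m m \<noteq> 0" unfolding pm_def
    by (rule funpow_pderiv_nonzero) (auto simp: legendre_nonzero degree_legendre)
  have "degree (pm m m) = 0" unfolding pm_def by (simp add: degree_funpow_pderiv degree_legendre)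
  then have e: "pm m m = [:coeff (pm m m) 0:]" by (simp add: degree_0_id)
  have "coeff (pm m m) 0 \<noteq> 0" using nz e by (metis pCons_0_0)
  then show ?thesis using e by blast
qed

lemma legendre0: "legendre_poly 0 = 1"
  by (simp add: legendre_poly_def)

lemma legendre1: "legendre_poly (Suc 0) = X"
  by (simp add: legendre_poly_def pderiv_pCons)

lemma pm_next: "poly (pm m (Suc m)) x = (2 * real m + 1) * x * poly (pm m m) x
   \<and> poly (pderiv (pm m (Suc m))) x = (2 * real m + 1) * poly (pm m m) x"
proof (cases m)
  case 0
  then show ?thesis by (simp add: pm_def legendre0 legendre1 pderiv_pCons)
next
  case (Suc k)
  have z: "pm m (Suc m - 2) = 0" using Suc by (simp add: pm_low)
  have pd: "pderiv (pm m m) = 0" using pm_diag[of m] by auto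
  have n2: "Suc m \<ge> 2" using Suc by simp
  have e1: "real (Suc m) - real m = 1" "2 * real (Suc m) - 1 = 2 * real m + 1" "Suc m - 1 = m" by auto
  note r1 = recT_vals(1)[OF n2, of m x] and r2 = recT_vals(2)[OF n2, of m x]
  show ?thesis using r1 r2 unfolding e1 z pd by simp
qed


definition Wr :: "nat \<Rightarrow> nat \<Rightarrow> real \<Rightarrow> real" where
  "Wr m n x = poly (pm m n) x * poly (pderiv (pm m (n-2))) x - poly (pm m (n-2)) x * poly (pderiv (pm m n)) x"

lemma W_case2:
  assumes "x \<noteq> 0" shows "x * Wr m (m+2) x < 0"
proof -
  define a where "a i = poly (pm m i) x" for i
  define d where "d i = poly (pderiv (pm m i)) x" for i
  obtain c where c0: "c \<noteq> 0" and cm: "pm m m = [:c:]" using pm_diag[of m] by blast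
  have am: "a m = c" and dm: "d m = 0" by (simp_all add: a_def d_def cm)
  have am1: "a (Suc m) = (2 * real m + 1) * x * c" and dm1: "d (Suc m) = (2 * real m + 1) * c"
    using pm_next[of m x] by (simp_all add: a_def d_def cm)
  have T: "(real i - real m) * a i = (2 * real i - 1) * x * a (i-1) - (real i + real m - 1) * a (i-2)"
    "(real i - real m) * d i = (2 * real i - 1) * (a (i-1) + x * d (i-1)) - (real i + real m - 1) * d (i-2)"
    if "i \<ge> 2" for i
    using recT_vals[OF that, of m x] by (simp_all add: a_def d_def)
  have Wd: "Wr m i x = a i * d (i-2) - a (i-2) * d i" for i by (simp add: Wr_def a_def d_def)
  have x2: "x^2 > 0" using assms by simp
  have t1: "2 * a (m+2) = (2 * real m + 3) * x * a (Suc m) - (2 * real m + 1) * a m"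
    and t2: "2 * d (m+2) = (2 * real m + 3) * (a (Suc m) + x * d (Suc m)) - (2 * real m + 1) * d m"
    using T[of "m+2"] by (simp_all add: algebra_simps)
  have "x * Wr m (m+2) x = - ((2 * real m + 3) * (2 * real m + 1) * (x^2 * c^2))"
    unfolding Wd using t1 t2 am dm am1 dm1 by (simp add: numeral_eq_Suc)
  also have "\<dots> < 0" using x2 c0 by (simp add: mult_pos_pos)
  finally show ?thesis by simp
qed

lemma W_case3:
  assumes "x \<noteq> 0" shows "x * Wr m (m+3) x < 0"
proof -
  define a where "a i = poly (pm m i) x" for i
  define d where "d i = poly (pderiv (pm m i)) x" for i
  obtain c where c0: "c \<noteq> 0" and cm: "pm m m = [:c:]" using pm_diag[of m] by blast
  have am: "a m = c" and dm: "d m = 0" by (simp_all add: a_def d_def cm)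
  have am1: "a (Suc m) = (2 * real m + 1) * x * c" and dm1: "d (Suc m) = (2 * real m + 1) * c"
    using pm_next[of m x] by (simp_all add: a_def d_def cm)
  have T: "(real i - real m) * a i = (2 * real i - 1) * x * a (i-1) - (real i + real m - 1) * a (i-2)"
    "(real i - real m) * d i = (2 * real i - 1) * (a (i-1) + x * d (i-1)) - (real i + real m - 1) * d (i-2)"
    if "i \<ge> 2" for i
    using recT_vals[OF that, of m x] by (simp_all add: a_def d_def)
  have Wd: "Wr m i x = a i * d (i-2) - a (i-2) * d i" for i by (simp add: Wr_def a_def d_def)
  have x2: "x^2 > 0" using assms by simp
  have t1: "3 * a (m+3) = (2 * real m + 5) * x * a (m+2) - (2 * real m + 2) * a (Suc m)"
    and t2: "3 * d (m+3) = (2 * real m + 5) * (a (m+2) + x * d (m+2)) - (2 * real m + 2) * d (Suc m)"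
    using T[of "m+3"] by (simp_all add: algebra_simps numeral_eq_Suc)
  have t3: "2 * d (m+2) = (2 * real m + 3) * (a (Suc m) + x * d (Suc m)) - (2 * real m + 1) * d m"
    using T[of "m+2"] by (simp_all add: algebra_simps)
  have "3 * (x * Wr m (m+3) x) = - ((2 * real m + 5) * (2 * real m + 3) * (2 * real m + 1)^2 * (x^2 * x^2 * c^2))"
    unfolding Wd using t1 t2 t3 am dm am1 dm1 by (simp add: numeral_eq_Suc) algebra
  also have "\<dots> < 0" using x2 c0 by (simp add: mult_pos_pos)
  finally show ?thesis by simp
qed

lemma W_step:
  assumes "x \<noteq> 0" and nk: "n = k + 4" and mk: "m \<le> k" and IH: "x * Wr m (k+2) x < 0"
  shows "x * Wr m n x < 0"
proof -
  define a where "a i = poly (pm m i) x" for i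
  define d where "d i = poly (pderiv (pm m i)) x" for i
  obtain c where c0: "c \<noteq> 0" and cm: "pm m m = [:c:]" using pm_diag[of m] by blast
  have am: "a m = c" and dm: "d m = 0" by (simp_all add: a_def d_def cm)
  have am1: "a (Suc m) = (2 * real m + 1) * x * c" and dm1: "d (Suc m) = (2 * real m + 1) * c"
    using pm_next[of m x] by (simp_all add: a_def d_def cm)
  have T: "(real i - real m) * a i = (2 * real i - 1) * x * a (i-1) - (real i + real m - 1) * a (i-2)"
    "(real i - real m) * d i = (2 * real i - 1) * (a (i-1) + x * d (i-1)) - (real i + real m - 1) * d (i-2)"
    if "i \<ge> 2" for i
    using recT_vals[OF that, of m x] by (simp_all add: a_def d_def)
  have Wd: "Wr m i x = a i * d (i-2) - a (i-2) * d i" for i by (simp add: Wr_def a_def d_def)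
  have x2: "x^2 > 0" using assms by simp
  have h1: "(real k + 4 - real m) * a (k+4) = (2 * real k + 7) * x * a (k+3) - (real k + real m + 3) * a (k+2)"
    "(real k + 4 - real m) * d (k+4) = (2 * real k + 7) * (a (k+3) + x * d (k+3)) - (real k + real m + 3) * d (k+2)"
    using T[of "k+4"] by (simp_all add: algebra_simps)
  have h2: "(real k + 3 - real m) * a (k+3) = (2 * real k + 5) * x * a (k+2) - (real k + real m + 2) * a (k+1)"
    "(real k + 3 - real m) * d (k+3) = (2 * real k + 5) * (a (k+2) + x * d (k+2)) - (real k + real m + 2) * d (k+1)"
    using T[of "k+3"] by (simp_all add: algebra_simps)
  have h3: "(real k + 2 - real m) * a (k+2) = (2 * real k + 3) * x * a (k+1) - (real k + real m + 1) * a k"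
    "(real k + 2 - real m) * d (k+2) = (2 * real k + 3) * (a (k+1) + x * d (k+1)) - (real k + real m + 1) * d k"
    using T[of "k+2"] by (simp_all add: algebra_simps)
  have rec: "(2 * real k + 3) * (real k + 4 - real m) * (real k + 3 - real m) * Wr m n x
     = -2 * (2 * real k + 7) * (2 * real k + 5) * (2 * real k + 3) * x * (a (k+2))^2
       + (2 * real k + 7) * (real k + real m + 2) * (real k + real m + 1) * Wr m (k+2) x"
    unfolding Wd nk using Walg[OF h1(1) h1(2) h2(1) h2(2) h3(1) h3(2)] by simp
  define A where "A = (2 * real k + 3) * (real k + 4 - real m) * (real k + 3 - real m)"
  define B where "B = 2 * (2 * real k + 7) * (2 * real k + 5) * (2 * real k + 3)"
  define E where "E = (2 * real k + 7) * (real k + real m + 2) * (real k + real m + 1)"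
  have Ap: "A > 0" unfolding A_def using mk by (intro mult_pos_pos) auto
  have Bp: "B > 0" unfolding B_def by simp
  have Ep: "E > 0" unfolding E_def by (intro mult_pos_pos) auto
  have "A * (x * Wr m n x) = - (B * (x^2 * (a (k+2))^2)) + E * (x * Wr m (k+2) x)"
    using arg_cong[OF rec, of "\<lambda>z. x * z"] unfolding A_def B_def E_def
    by (simp only: algebra_simps power2_eq_square)
  also have "\<dots> < 0"
  proof -
    have "B * (x^2 * (a (k+2))^2) \<ge> 0" using Bp by simp
    moreover have "E * (x * Wr m (k+2) x) < 0" using Ep IH by (simp add: mult_pos_neg)
    ultimately show ?thesis by linarith
  qed
  finally have "A * (x * Wr m n x) < 0" .
  then show ?thesis using Ap by (simp add: mult_less_0_iff)
qed

lemma W_neg: "m + 2 \<le> n \<Longrightarrow> x \<noteq> 0 \<Longrightarrow> x * Wr m n x < 0"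
proof (induction n rule: less_induct)
  case (less n)
  consider "n = m + 2" | "n = m + 3" | "n \<ge> m + 4" using less.prems by linarith
  then show ?case
  proof cases
    case 1 then show ?thesis using W_case2 less.prems by simp
  next
    case 2 then show ?thesis using W_case3 less.prems by simp
  next
    case 3
    obtain k where nk: "n = k + 4" using 3 by (metis add.commute le_Suc_ex le_add2 le_trans)
    have mk: "m \<le> k" using 3 nk by simp
    have IH: "x * Wr m (k+2) x < 0" using less.IH[of "k+2"] nk mk less.prems by simp
    show ?thesis by (rule W_step[OF less.prems(2) nk mk IH])
  qed
qed

lemma pderiv_X: "pderiv X = 1"
  by (simp add: pderiv_pCons)

definition Eq :: "real \<Rightarrow> real \<Rightarrow> real poly \<Rightarrow> bool" where
  "Eq a b p \<longleftrightarrow> L * pderiv (pderiv p) + smult a (X * pderiv p) + smult b p = 0"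

lemma Eq_step: "Eq a b p \<Longrightarrow> Eq (a+2) (a+b) (pderiv p)"
proof -
  assume h: "Eq a b p"
  have "L * pderiv (pderiv (pderiv p)) + smult (a+2) (X * pderiv (pderiv p)) + smult (a+b) (pderiv p)
     = pderiv (L * pderiv (pderiv p) + smult a (X * pderiv p) + smult b p)"
    by (simp only: pderiv_add pderiv_diff pderiv_smult pderiv_mult pderiv_L pderiv_X pderiv_fpow)
      (subst poly_eq_poly_eq_iff[symmetric], rule ext, simp only: poly_add poly_mult poly_smult poly_diff poly_power poly_minus, simp add: algebra_simps)
  also have "\<dots> = 0" using h unfolding Eq_def by simp
  finally show ?thesis unfolding Eq_def .
qed

lemma Eq_iter: "Eq a b p \<Longrightarrow> Eq (a + 2 * real k) (b + real k * a + real k * (real k - 1)) ((pderiv^^k) p)"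
proof (induction k)
  case 0 then show ?case by simp
next
  case (Suc k)
  have "Eq (a + 2 * real k + 2) (a + 2 * real k + (b + real k * a + real k * (real k - 1))) ((pderiv^^(Suc k)) p)"
    using Eq_step[OF Suc.IH[OF Suc.prems]] by simp
  moreover have "a + 2 * real k + 2 = a + 2 * real (Suc k)"
    "a + 2 * real k + (b + real k * a + real k * (real k - 1)) = b + real (Suc k) * a + real (Suc k) * (real (Suc k) - 1)"
    by (simp_all add: algebra_simps)
  ultimately show ?case by simp
qed

lemma Eq_smult: "Eq a b p \<Longrightarrow> Eq a b (smult c p)"
proof -
  assume h: "Eq a b p"
  have "L * pderiv (pderiv (smult c p)) + smult a (X * pderiv (smult c p)) + smult b (smult c p)
    = smult c (L * pderiv (pderiv p) + smult a (X * pderiv p) + smult b p)"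
    by (simp only: pderiv_add pderiv_diff pderiv_smult pderiv_mult pderiv_L pderiv_X pderiv_fpow)
      (subst poly_eq_poly_eq_iff[symmetric], rule ext, simp only: poly_add poly_mult poly_smult poly_diff poly_power poly_minus, simp add: algebra_simps)
  then show ?thesis using h unfolding Eq_def by simp
qed

lemma Eq_base: "Eq (2 - 2 * real n) (- 2 * real n) (L ^ n)"
proof -
  have Lf: "L * pderiv (L^n) = smult (2 * real n) (X * L^n)"
  proof (cases n)
    case 0 then show ?thesis by simp
  next
    case (Suc j)
    then show ?thesis by (simp only: pderiv_add pderiv_diff pderiv_smult pderiv_mult pderiv_L pderiv_X pderiv_fpow)
      (subst poly_eq_poly_eq_iff[symmetric], rule ext, simp only: poly_add poly_mult poly_smult poly_diff poly_power poly_minus, simp add: algebra_simps)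
  qed
  have "L * pderiv (pderiv (L^n)) + smult (2 - 2 * real n) (X * pderiv (L^n)) + smult (- 2 * real n) (L^n)
     = pderiv (L * pderiv (L^n)) - pderiv (smult (2 * real n) (X * L^n))"
    by (simp only: pderiv_add pderiv_diff pderiv_smult pderiv_mult pderiv_L pderiv_X pderiv_fpow)
      (subst poly_eq_poly_eq_iff[symmetric], rule ext, simp only: poly_add poly_mult poly_smult poly_diff poly_power poly_minus, simp add: algebra_simps)
  also have "\<dots> = 0" by (simp only: Lf diff_self)
  finally show ?thesis unfolding Eq_def .
qed

lemma Eq_pm: "Eq (2 * real m + 2) (real m * (real m + 1) - real n * (real n + 1)) (pm m n)"
proof -
  have "Eq (2 - 2 * real n + 2 * real (m+n)) (- 2 * real n + real (m+n) * (2 - 2 * real n) + real (m+n) * (real (m+n) - 1))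
     ((pderiv^^(m+n)) (L^n))" by (rule Eq_iter[OF Eq_base])
  then have "Eq (2 * real m + 2) (real m * (real m + 1) - real n * (real n + 1)) ((pderiv^^(m+n)) (L^n))"
    by (simp add: algebra_simps)
  then show ?thesis unfolding pm_alt by (rule Eq_smult)
qed

lemma Eq_vanish:
  assumes "t^2 \<noteq> 1"
  shows "Eq a b p \<Longrightarrow> poly p t = 0 \<Longrightarrow> poly (pderiv p) t = 0 \<Longrightarrow> poly ((pderiv^^k) p) t = 0"
proof (induction k arbitrary: a b p)
  case 0 then show ?case by simp
next
  case (Suc k)
  have "poly (L * pderiv (pderiv p) + smult a (X * pderiv p) + smult b p) t = 0"
    using Suc.prems(1) unfolding Eq_def by simp
  then have "(t^2 - 1) * poly (pderiv (pderiv p)) t = 0" using Suc.prems(2,3)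
    by (simp add: algebra_simps power2_eq_square)
  then have "poly (pderiv (pderiv p)) t = 0" using assms by simp
  then have "poly ((pderiv^^k) (pderiv p)) t = 0"
    using Suc.IH[OF Eq_step[OF Suc.prems(1)] Suc.prems(3)] by simp
  then show ?case by (simp add: funpow_Suc_right del: funpow.simps)
qed

lemma deg0_zero: "degree (p::real poly) = 0 \<Longrightarrow> poly p t = 0 \<Longrightarrow> p = 0"
  by (metis degree_0_id poly_pCons mult_zero_right add.right_neutral poly_0 pCons_0_0)

lemma allzero: "(\<forall>k. poly ((pderiv^^k) p) t = 0) \<Longrightarrow> (p::real poly) = 0"
proof -
  have "\<forall>p::real poly. degree p \<le> N \<longrightarrow> (\<forall>k. poly ((pderiv^^k) p) t = 0) \<longrightarrow> p = 0" for N
  proof (induction N)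
    case 0
    show ?case
    proof (intro allI impI)
      fix p :: "real poly" assume d: "degree p \<le> 0" and h: "\<forall>k. poly ((pderiv^^k) p) t = 0"
      have "poly p t = 0" using h[rule_format, of 0] by simp
      then show "p = 0" using d deg0_zero by simp
    qed
  next
    case (Suc N)
    show ?case
    proof (intro allI impI)
      fix p :: "real poly" assume d: "degree p \<le> Suc N" and h: "\<forall>k. poly ((pderiv^^k) p) t = 0"
      have "degree (pderiv p) \<le> N" using d by (simp add: degree_pderiv)
      moreover have "\<forall>k. poly ((pderiv^^k) (pderiv p)) t = 0"
        using h by (metis funpow_Suc_right o_apply)
      ultimately have "pderiv p = 0" using Suc.IH by blast
      then have "degree p = 0" by (simp add: pderiv_eq_0_iff)
      moreover have "poly p t = 0" using h[rule_format, of 0] by simp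
      ultimately show "p = 0" using deg0_zero by blast
    qed
  qed
  then show "(\<forall>k. poly ((pderiv^^k) p) t = 0) \<Longrightarrow> p = 0" by blast
qed


lemma sder: "-1 < (t::real) \<Longrightarrow> t < 1 \<Longrightarrow> \<exists>D. ((\<lambda>x. sqrt (1 - x^2) ^ m) has_real_derivative D) (at t)"
proof -
  assume "-1 < t" "t < 1"
  then have p: "1 - t^2 > 0" by (simp add: abs_square_less_1)
  have d1: "((\<lambda>x. 1 - x^2) has_real_derivative (-2*t)) (at t)" by (auto intro!: derivative_eq_intros)
  have d2: "(sqrt has_real_derivative inverse (sqrt (1-t^2))/2) (at (1-t^2))" by (rule DERIV_real_sqrt) (use p in simp)
  have d3: "((\<lambda>x. sqrt(1-x^2)) has_real_derivative (inverse (sqrt (1-t^2))/2 * (-2*t))) (at t)"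
    using DERIV_chain2[OF d2 d1] by simp
  show ?thesis using DERIV_power[OF d3, of m] by blast
qed

lemma pm_nonzero: "m \<le> n \<Longrightarrow> pm m n \<noteq> 0"
  unfolding pm_def by (rule funpow_pderiv_nonzero) (auto simp: legendre_nonzero degree_legendre)

theorem propositionA5:
  fixes t :: real and m n :: nat
  assumes "-1 < t" and "t < 1"
  shows "(t \<noteq> 0 \<and> m + 2 \<le> n \<longrightarrow>
           assoc_legendre n m t * deriv (assoc_legendre (n - 2) m) t
           - assoc_legendre (n - 2) m t * deriv (assoc_legendre n m) t \<noteq> 0)
       \<and> (m \<le> n \<longrightarrow>
           \<not> (assoc_legendre n m t = 0 \<and> deriv (assoc_legendre n m) t = 0))"
proof -
  have p: "1 - t^2 > 0" using assms by (simp add: abs_square_less_1)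
  define \<sigma> where "\<sigma> = sqrt (1 - t^2) ^ m"
  have sp: "\<sigma> > 0" unfolding \<sigma>_def using p by simp
  obtain D where sD: "((\<lambda>x. sqrt (1 - x^2) ^ m) has_real_derivative D) (at t)"
    using sder[OF assms] by blast
  have AL: "assoc_legendre k m = (\<lambda>x. sqrt (1 - x^2) ^ m * poly (pm m k) x)" for k
    by (simp add: fun_eq_iff assoc_legendre_def pm_def)
  have Av: "assoc_legendre k m t = \<sigma> * poly (pm m k) t" for k
    by (simp add: AL \<sigma>_def)
  have Ad: "deriv (assoc_legendre k m) t = D * poly (pm m k) t + poly (pderiv (pm m k)) t * \<sigma>" for k
  proof -
    have "((\<lambda>x. sqrt (1 - x^2) ^ m * poly (pm m k) x) has_real_derivative
        D * poly (pm m k) t + poly (pderiv (pm m k)) t * sqrt (1 - t^2) ^ m) (at t)"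
      by (rule DERIV_mult[OF sD poly_DERIV])
    then show ?thesis unfolding AL \<sigma>_def by (rule DERIV_imp_deriv)
  qed
  have t21: "t^2 \<noteq> 1" using p by simp
  show ?thesis
  proof (intro conjI impI)
    assume h: "t \<noteq> 0 \<and> m + 2 \<le> n"
    have e: "assoc_legendre n m t * deriv (assoc_legendre (n - 2) m) t
           - assoc_legendre (n - 2) m t * deriv (assoc_legendre n m) t = \<sigma>^2 * Wr m n t"
      unfolding Av Ad Wr_def by (simp add: algebra_simps power2_eq_square)
    have "t * Wr m n t < 0" using W_neg h by blast
    then have "Wr m n t \<noteq> 0" by auto
    then show "assoc_legendre n m t * deriv (assoc_legendre (n - 2) m) t
           - assoc_legendre (n - 2) m t * deriv (assoc_legendre n m) t \<noteq> 0"
      unfolding e using sp by simp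
  next
    assume mn: "m \<le> n"
    show "\<not> (assoc_legendre n m t = 0 \<and> deriv (assoc_legendre n m) t = 0)"
    proof
      assume h: "assoc_legendre n m t = 0 \<and> deriv (assoc_legendre n m) t = 0"
      have z1: "poly (pm m n) t = 0" using h sp unfolding Av by simp
      have z2: "poly (pderiv (pm m n)) t = 0" using h sp z1 unfolding Ad by simp
      have "\<forall>k. poly ((pderiv^^k) (pm m n)) t = 0"
        using Eq_vanish[OF t21 Eq_pm z1 z2] by blast
      then have "pm m n = 0" by (rule allzero)
      then show False using pm_nonzero[OF mn] by simp
    qed
  qed
qed

end
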